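(* Let $u, v, w \in \mathbb{N}^2$ be such that any two of $u, v, w$ are linearly independent. Then the submonoid $\mathbb{N}u+\mathbb{N}v+\mathbb{N}w$ of $\mathbb{N}^2$ generated by $u,v,w$ is isomorphic (as a monoid) to $\Lambda^{p,q,r}$ for some positive integers $p, q, r$.
   Context: $\mathbb{N}=\{0,1,2,\dots\}$. For positive integers $p,q,r$, $\Lambda^{p,q,r}=\langle a,b,c\mid pa+qb=rc\rangle$ is the quotient of the free commutative monoid $\mathbb{N}a\oplus\mathbb{N}b\oplus\mathbb{N}c$ by the congruence generated by $\lambda+pa+qb\sim\lambda+rc$ ($\lambda\in\mathbb{N}a\oplus\mathbb{N}b\oplus\mathbb{N}c$). *)

theory Defs
  imports Complex_Main
begin

type_synonym vec2 = "nat \<times> nat"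
type_synonym tri = "nat \<times> nat \<times> nat"

definition lin_indep2 :: "vec2 \<Rightarrow> vec2 \<Rightarrow> bool" where
  "lin_indep2 u v \<longleftrightarrow>
     (\<forall>a b :: real. a * real (fst u) + b * real (fst v) = 0 \<and>
                    a * real (snd u) + b * real (snd v) = 0 \<longrightarrow> a = 0 \<and> b = 0)"

definition vadd :: "vec2 \<Rightarrow> vec2 \<Rightarrow> vec2" where
  "vadd x y = (fst x + fst y, snd x + snd y)"

definition gen_submonoid :: "vec2 \<Rightarrow> vec2 \<Rightarrow> vec2 \<Rightarrow> vec2 set" where
  "gen_submonoid u v w =
     {(i * fst u + j * fst v + k * fst w, i * snd u + j * snd v + k * snd w) | i j k. True}"

text \<open>Free commutative monoid N a + N b + N c as triples, with addition.\<close>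
definition tadd :: "tri \<Rightarrow> tri \<Rightarrow> tri" where
  "tadd x y = (case x of (x1, x2, x3) \<Rightarrow> case y of (y1, y2, y3) \<Rightarrow> (x1 + y1, x2 + y2, x3 + y3))"

definition lam_base :: "nat \<Rightarrow> nat \<Rightarrow> nat \<Rightarrow> tri rel" where
  "lam_base p q r = {(tadd l (p, q, 0), tadd l (0, 0, r)) | l. True}"

text \<open>The congruence generated: the equivalence closure of the (translation-invariant)
  generating pairs.\<close>
definition lam_cong :: "nat \<Rightarrow> nat \<Rightarrow> nat \<Rightarrow> tri rel" where
  "lam_cong p q r = (lam_base p q r \<union> (lam_base p q r)\<inverse>)\<^sup>*"

definition Lam :: "nat \<Rightarrow> nat \<Rightarrow> nat \<Rightarrow> tri set set" where
  "Lam p q r = UNIV // lam_cong p q r"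

definition lam_zero :: "nat \<Rightarrow> nat \<Rightarrow> nat \<Rightarrow> tri set" where
  "lam_zero p q r = lam_cong p q r `` {(0, 0, 0)}"

definition lam_add :: "nat \<Rightarrow> nat \<Rightarrow> nat \<Rightarrow> tri set \<Rightarrow> tri set \<Rightarrow> tri set" where
  "lam_add p q r X Y = (\<Union>x\<in>X. \<Union>y\<in>Y. lam_cong p q r `` {tadd x y})"

definition lam_iso :: "nat \<Rightarrow> nat \<Rightarrow> nat \<Rightarrow> vec2 set \<Rightarrow> (tri set \<Rightarrow> vec2) \<Rightarrow> bool" where
  "lam_iso p q r S \<phi> \<longleftrightarrow>
     bij_betw \<phi> (Lam p q r) S \<and>
     \<phi> (lam_zero p q r) = (0, 0) \<and>
     (\<forall>X\<in>Lam p q r. \<forall>Y\<in>Lam p q r. \<phi> (lam_add p q r X Y) = vadd (\<phi> X) (\<phi> Y))"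

end

theory Submission
  imports Defs
begin

lemma core:
  fixes a1 a2 b1 b2 c1 c2 p q r :: nat
  assumes pos: "p>0" "q>0" "r>0"
  and rel1: "p*a1 + q*b1 = r*c1" and rel2: "p*a2+q*b2 = r*c2"
  and kern: "\<And>x y z::int. x*int a1 + y*int b1 = z*int c1 \<Longrightarrow> x*int a2+y*int b2 = z*int c2 \<Longrightarrow> \<exists>t::int. x = t*int p \<and> y = t*int q \<and> z = t*int r"
  shows "\<exists>\<phi>. lam_iso p q r (gen_submonoid (a1,a2) (b1,b2) (c1,c2)) \<phi>"
proof -
  define F where "F = (\<lambda>(i::nat,j::nat,k::nat). (i*a1+j*b1+k*c1, i*a2+j*b2+k*c2))"
  define S where "S = lam_base p q r \<union> (lam_base p q r)\<inverse>"
  have LC: "lam_cong p q r = S\<^sup>*" unfolding S_def lam_cong_def by simp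
  have Fadd: "F (tadd x y) = vadd (F x) (F y)" for x y
    by (cases x; cases y) (simp add: F_def tadd_def vadd_def algebra_simps)
  have stepS: "(x,y) \<in> lam_base p q r \<Longrightarrow> (x,y) \<in> lam_cong p q r" for x y
    unfolding LC S_def by blast
  have step: "((y1, y2, y3 + n*r), (y1+n*p, y2+n*q, y3)) \<in> lam_cong p q r" for n y1 y2 y3
  proof (induction n arbitrary: y1 y2)
    case 0 show ?case by (simp add: lam_cong_def)
  next
    case (Suc n)
    have "((y1+p, y2+q, y3 + n*r), (y1, y2, y3 + Suc n * r)) \<in> lam_base p q r"
      unfolding lam_base_def tadd_def by (auto intro!: exI[of _ "(y1,y2,y3+n*r)"])
    hence "((y1, y2, y3 + Suc n * r), (y1+p, y2+q, y3 + n*r)) \<in> lam_cong p q r"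
      unfolding LC S_def by blast
    moreover have "((y1+p, y2+q, y3 + n*r), (y1+p+n*p, y2+q+n*q, y3)) \<in> lam_cong p q r"
      by (rule Suc.IH)
    ultimately have "((y1, y2, y3 + Suc n * r), (y1+p+n*p, y2+q+n*q, y3)) \<in> lam_cong p q r"
      unfolding LC by (rule rtrancl_trans)
    thus ?case by (simp add: algebra_simps)
  qed
  have symS: "sym S" unfolding S_def sym_def by blast
  have symc: "(y,x) \<in> lam_cong p q r" if "(x,y) \<in> lam_cong p q r" for x y
    using sym_rtrancl[OF symS] that unfolding LC sym_def by blast
  have Fbase: "F b = F c" if bc: "(b,c) \<in> lam_base p q r" for b c
  proof -
    obtain l where "b = tadd l (p,q,0)" "c = tadd l (0,0,r)" using bc unfolding lam_base_def by blast
    moreover have "F (p,q,0) = F (0,0,r)" using rel1 rel2 by (simp add: F_def)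
    ultimately show ?thesis by (simp add: Fadd)
  qed
  have cong_iff: "(x,y) \<in> lam_cong p q r \<longleftrightarrow> F x = F y" for x y
  proof
    assume "(x,y) \<in> lam_cong p q r"
    hence "(x,y) \<in> S\<^sup>*" by (simp add: LC)
    thus "F x = F y"
    proof (induction rule: rtrancl_induct)
      case base then show ?case by simp
    next
      case (step b c)
      from step.hyps(2) have "F b = F c" unfolding S_def using Fbase by (metis S_def UnE converseD)
      with step.IH show ?case by simp
    qed
  next
    assume FE: "F x = F y"
    obtain x1 x2 x3 where X: "x = (x1,x2,x3)" by (cases x) auto
    obtain y1 y2 y3 where Y: "y = (y1,y2,y3)" by (cases y) auto
    have e1: "x1*a1+x2*b1+x3*c1 = y1*a1+y2*b1+y3*c1" and e2: "x1*a2+x2*b2+x3*c2 = y1*a2+y2*b2+y3*c2"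
      using FE by (simp_all add: F_def X Y)
    have i1: "(int x1 - int y1)*a1 + (int x2 - int y2)*b1 = (int y3 - int x3)*c1"
    proof -
      have "int (x1*a1+x2*b1+x3*c1) = int (y1*a1+y2*b1+y3*c1)" using e1 by simp
      thus ?thesis by (simp add: algebra_simps)
    qed
    have i2: "(int x1 - int y1)*a2 + (int x2 - int y2)*b2 = (int y3 - int x3)*c2"
    proof -
      have "int (x1*a2+x2*b2+x3*c2) = int (y1*a2+y2*b2+y3*c2)" using e2 by simp
      thus ?thesis by (simp add: algebra_simps)
    qed
    obtain t :: int where t: "int x1 - int y1 = t*int p" "int x2 - int y2 = t*int q" "int y3 - int x3 = t*int r"
      using kern[OF i1 i2] by blast
    show "(x,y) \<in> lam_cong p q r"
    proof (cases "t \<ge> 0")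
      case True
      then obtain n where n: "t = int n" using nonneg_int_cases by blast
      have "int x1 = int (y1 + n*p)" "int x2 = int (y2 + n*q)" "int y3 = int (x3 + n*r)" using t n by (simp_all add: algebra_simps)
      hence "x1 = y1 + n*p" "x2 = y2 + n*q" "y3 = x3 + n*r" by (simp_all only: of_nat_eq_iff)
      hence "(y,x) \<in> lam_cong p q r" using step[of y1 y2 x3 n] X Y by simp
      thus ?thesis by (rule symc)
    next
      case False
      then have "-t \<ge> 0" by simp
      then obtain n where "-t = int n" using nonneg_int_cases by blast
      hence n: "t = - int n" by simp
      have "int y1 = int (x1 + n*p)" "int y2 = int (x2 + n*q)" "int x3 = int (y3 + n*r)" using t n by (simp_all add: algebra_simps)
      hence "y1 = x1 + n*p" "y2 = x2 + n*q" "x3 = y3 + n*r" by (simp_all only: of_nat_eq_iff)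
      thus ?thesis using step[of x1 x2 y3 n] X Y by simp
    qed
  qed
  define cls where "cls z = {y. F y = F z}" for z
  have img: "lam_cong p q r `` {z} = cls z" for z
    unfolding cls_def Image_def using cong_iff by (auto simp del: split_paired_All)
  have LamE: "Lam p q r = range cls"
    unfolding Lam_def quotient_def using img by auto
  define \<phi> where "\<phi> X = F (SOME x. x \<in> X)" for X
  have phic: "\<phi> (cls z) = F z" for z
  proof -
    have "z \<in> cls z" by (simp add: cls_def)
    hence "(SOME x. x \<in> cls z) \<in> cls z" by (rule someI)
    thus ?thesis by (simp add: \<phi>_def cls_def)
  qed
  have rangeF: "range F = gen_submonoid (a1,a2) (b1,b2) (c1,c2)"
    unfolding gen_submonoid_def F_def image_def
    by auto
  have "lam_iso p q r (gen_submonoid (a1,a2) (b1,b2) (c1,c2)) \<phi>"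
    unfolding lam_iso_def
  proof (intro conjI ballI)
    show "bij_betw \<phi> (Lam p q r) (gen_submonoid (a1, a2) (b1, b2) (c1, c2))"
      unfolding bij_betw_def LamE rangeF[symmetric]
    proof
      show "inj_on \<phi> (range cls)"
      proof (rule inj_onI)
        fix X Y assume "X \<in> range cls" "Y \<in> range cls" "\<phi> X = \<phi> Y"
        then obtain x y where "X = cls x" "Y = cls y" "F x = F y" using phic by auto
        thus "X = Y" by (simp add: cls_def)
      qed
      show "\<phi> ` range cls = range F" using phic by (auto simp: image_iff) (metis phic)
    qed
    show "\<phi> (lam_zero p q r) = (0, 0)"
      unfolding lam_zero_def img phic by (simp add: F_def)
    fix X Y assume "X \<in> Lam p q r" "Y \<in> Lam p q r"
    then obtain x y where XY: "X = cls x" "Y = cls y" using LamE by auto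
    have "lam_add p q r X Y = cls (tadd x y)"
    proof -
      have "cls (tadd x' y') = cls (tadd x y)" if "x' \<in> cls x" "y' \<in> cls y" for x' y'
        using that by (simp add: cls_def Fadd)
      moreover have "x \<in> cls x" "y \<in> cls y" by (simp_all add: cls_def)
      ultimately show ?thesis unfolding lam_add_def img XY by blast
    qed
    thus "\<phi> (lam_add p q r X Y) = vadd (\<phi> X) (\<phi> Y)" using XY phic Fadd by simp
  qed
  thus ?thesis by blast
qed

lemma middle:
  fixes a1 a2 b1 b2 c1 c2 :: nat and \<alpha> \<beta> \<gamma> :: int
  assumes D: "int a1 * int b2 - int a2 * int b1 \<noteq> 0"
  and pos: "\<alpha> > 0" "\<beta> > 0" "\<gamma> > 0"
  and r1: "\<alpha>*int a1 + \<beta>*int b1 = \<gamma>*int c1"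
  and r2: "\<alpha>*int a2 + \<beta>*int b2 = \<gamma>*int c2"
  shows "\<exists>p q r :: nat. p > 0 \<and> q > 0 \<and> r > 0 \<and>
           (\<exists>\<phi>. lam_iso p q r (gen_submonoid (a1,a2) (b1,b2) (c1,c2)) \<phi>)"
proof -
  define g where "g = gcd \<alpha> (gcd \<beta> \<gamma>)"
  have gpos: "g > 0" using pos by (simp add: g_def)
  have "g dvd \<alpha>" "g dvd \<beta>" "g dvd \<gamma>" unfolding g_def
    by (meson dvd_trans gcd_dvd1 gcd_dvd2)+
  then obtain P Q R where PQR: "\<alpha> = P*g" "\<beta> = Q*g" "\<gamma> = R*g"
    by (metis dvd_def mult.commute)
  have Ppos: "P > 0" "Q > 0" "R > 0" using PQR pos gpos by (auto simp: zero_less_mult_iff)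
  obtain s1 s2 where s12: "s1*\<alpha> + s2*gcd \<beta> \<gamma> = g" unfolding g_def using bezout_int by blast
  obtain s3 s4 where s34: "s3*\<beta> + s4*\<gamma> = gcd \<beta> \<gamma>" using bezout_int by blast
  have "(s1*P + s2*s3*Q + s2*s4*R) * g = s1*\<alpha> + s2*(s3*\<beta> + s4*\<gamma>)"
    using PQR by (simp add: algebra_simps)
  also have "\<dots> = 1 * g" using s12 s34 by simp
  finally have "(s1*P + s2*s3*Q + s2*s4*R) * g = 1 * g" .
  hence bez: "s1*P + s2*s3*Q + s2*s4*R = 1" using gpos by simp
  define p where "p = nat P"
  define q where "q = nat Q"
  define r where "r = nat R"
  have pi: "int p = P" "int q = Q" "int r = R" using Ppos by (simp_all add: p_def q_def r_def)
  have "(P*int a1 + Q*int b1) * g = (R*int c1) * g" using r1 PQR by (simp add: algebra_simps)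
  hence "int (p*a1 + q*b1) = int (r*c1)" using gpos pi by simp
  hence rel1: "p*a1 + q*b1 = r*c1" by (simp only: of_nat_eq_iff)
  have "(P*int a2 + Q*int b2) * g = (R*int c2) * g" using r2 PQR by (simp add: algebra_simps)
  hence "int (p*a2 + q*b2) = int (r*c2)" using gpos pi by simp
  hence rel2: "p*a2 + q*b2 = r*c2" by (simp only: of_nat_eq_iff)
  have kern: "\<exists>t::int. x = t*int p \<and> y = t*int q \<and> z = t*int r"
    if e1: "x*int a1 + y*int b1 = z*int c1" and e2: "x*int a2+y*int b2 = z*int c2" for x y z :: int
  proof -
    define Dv where "Dv = int a1 * int b2 - int a2 * int b1"
    have "x*Dv = z*(int c1 * int b2 - int c2 * int b1)"
      unfolding Dv_def using e1 e2 by algebra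
    moreover have "\<alpha>*Dv = \<gamma>*(int c1 * int b2 - int c2 * int b1)"
      unfolding Dv_def using r1 r2 by algebra
    ultimately have "(x*\<gamma>)*Dv = (z*\<alpha>)*Dv" by algebra
    hence "x*\<gamma> = z*\<alpha>" using D unfolding Dv_def by simp
    hence "(x*R)*g = (z*P)*g" using PQR by (simp add: algebra_simps)
    hence xR: "x*R = z*P" using gpos by simp
    define Ev where "Ev = int b1 * int a2 - int b2 * int a1"
    have Ev: "Ev \<noteq> 0" using D unfolding Ev_def by (simp add: algebra_simps)
    have "y*Ev = z*(int c1 * int a2 - int c2 * int a1)"
      unfolding Ev_def using e1 e2 by algebra
    moreover have "\<beta>*Ev = \<gamma>*(int c1 * int a2 - int c2 * int a1)"
      unfolding Ev_def using r1 r2 by algebra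
    ultimately have "(y*\<gamma>)*Ev = (z*\<beta>)*Ev" by algebra
    hence "y*\<gamma> = z*\<beta>" using Ev by simp
    hence "(y*R)*g = (z*Q)*g" using PQR by (simp add: algebra_simps)
    hence yR: "y*R = z*Q" using gpos by simp
    define t where "t = s1*x + s2*s3*y + s2*s4*z"
    have "t*R = z*(s1*P + s2*s3*Q + s2*s4*R)" unfolding t_def using xR yR by algebra
    hence tR: "t*R = z" using bez by simp
    have "x*R = (t*P)*R" using xR tR by (simp add: algebra_simps)
    hence "x = t*P" using Ppos by simp
    moreover have "y*R = (t*Q)*R" using yR tR by (simp add: algebra_simps)
    hence "y = t*Q" using Ppos by simp
    ultimately show ?thesis using tR pi by (auto simp: mult.commute)
  qed
  have "\<exists>\<phi>. lam_iso p q r (gen_submonoid (a1,a2) (b1,b2) (c1,c2)) \<phi>"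
    by (rule core[OF _ _ _ rel1 rel2 kern]) (use Ppos pi in auto)
  moreover have "p > 0" "q > 0" "r > 0" using Ppos pi by auto
  ultimately show ?thesis by blast
qed

lemma li_det:
  assumes "lin_indep2 (a1,a2) (b1,b2)"
  shows "int a1 * int b2 - int a2 * int b1 \<noteq> 0"
proof
  assume "int a1 * int b2 - int a2 * int b1 = 0"
  hence "int (a1 * b2) = int (a2 * b1)" by simp
  hence "a1 * b2 = a2 * b1" by (simp only: of_nat_eq_iff)
  hence "real (a1 * b2) = real (a2 * b1)" by (simp only:)
  hence E: "real a1 * real b2 = real a2 * real b1" by (simp only: of_nat_mult)
  have L: "a * real a1 + b * real b1 = 0 \<Longrightarrow> a * real a2 + b * real b2 = 0 \<Longrightarrow> a = 0 \<and> b = 0" for a b :: real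
    using assms unfolding lin_indep2_def fst_conv snd_conv by blast
  show False
  proof (cases "b1 = 0 \<and> a1 = 0")
    case False
    have h1: "real b1 * real a1 + (- real a1) * real b1 = 0" by simp
    have h2: "real b1 * real a2 + (- real a1) * real b2 = 0" using E by (simp add: mult.commute)
    from L[OF h1 h2] False show False by simp
  next
    case True
    show False
    proof (cases "b2 = 0 \<and> a2 = 0")
      case False
      have h1: "real b2 * real a1 + (- real a2) * real b1 = 0" using True by simp
      have h2: "real b2 * real a2 + (- real a2) * real b2 = 0" by simp
      from L[OF h1 h2] False show False by simp
    next
      case True2: True
      have h1: "1 * real a1 + 0 * real b1 = 0" "1 * real a2 + 0 * real b2 = 0" using True True2 by simp_all
      from L[OF h1] show False by simp
    qed
  qed
qed

lemma gs_swap12: "gen_submonoid a b c = gen_submonoid b a c"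
  unfolding gen_submonoid_def
  by (auto; (rule_tac x=j in exI, rule_tac x=i in exI, rule_tac x=k in exI, simp add: add_ac))

lemma gs_swap23: "gen_submonoid a b c = gen_submonoid a c b"
  unfolding gen_submonoid_def
  by (auto; (rule_tac x=i in exI, rule_tac x=k in exI, rule_tac x=j in exI, simp add: add_ac))

lemma signs:
  fixes a1 b1 c1 :: nat and \<alpha> \<beta> \<gamma> :: int
  assumes "\<alpha> > 0" "\<beta> > 0" "\<gamma> \<le> 0" "\<alpha>*int a1 + \<beta>*int b1 = \<gamma>*int c1"
  shows "a1 = 0"
proof -
  have "\<alpha>*int a1 \<ge> 0" "\<beta>*int b1 \<ge> 0" "\<gamma>*int c1 \<le> 0" using assms
    by (simp_all add: mult_nonpos_nonneg)
  hence "\<alpha>*int a1 = 0" using assms(4) by linarith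
  thus ?thesis using assms(1) by simp
qed

theorem proposition3p1:
  fixes u v w :: "nat \<times> nat"
  assumes "lin_indep2 u v" and "lin_indep2 u w" and "lin_indep2 v w"
  shows "\<exists>p q r :: nat. p > 0 \<and> q > 0 \<and> r > 0 \<and>
           (\<exists>\<phi>. lam_iso p q r (gen_submonoid u v w) \<phi>)"
proof -
  obtain u1 u2 where U: "u = (u1,u2)" by (cases u)
  obtain v1 v2 where V: "v = (v1,v2)" by (cases v)
  obtain w1 w2 where W: "w = (w1,w2)" by (cases w)
  define d1 where "d1 = int u1 * int v2 - int u2 * int v1"
  define d2 where "d2 = int v1 * int w2 - int v2 * int w1"
  define d3 where "d3 = int u1 * int w2 - int u2 * int w1"
  have n1: "d1 \<noteq> 0" using li_det assms(1) U V d1_def by simp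
  have n2: "d2 \<noteq> 0" using li_det assms(3) V W d2_def by simp
  have n3: "d3 \<noteq> 0" using li_det assms(2) U W d3_def by simp
  have e1: "d2 * int u1 + d1 * int w1 = d3 * int v1" unfolding d1_def d2_def d3_def by algebra
  have e2: "d2 * int u2 + d1 * int w2 = d3 * int v2" unfolding d1_def d2_def d3_def by algebra
  have G1: "gen_submonoid (u1,u2) (w1,w2) (v1,v2) = gen_submonoid u v w"
    using U V W gs_swap23 by simp
  have G2: "gen_submonoid (w1,w2) (v1,v2) (u1,u2) = gen_submonoid u v w"
    using U V W gs_swap12[of w v u] gs_swap23[of v w u] gs_swap12[of v u w] by simp
  have G3: "gen_submonoid (u1,u2) (v1,v2) (w1,w2) = gen_submonoid u v w"
    using U V W by simp
  have D13: "int w1 * int v2 - int w2 * int v1 \<noteq> 0" using n2 unfolding d2_def by (simp add: algebra_simps)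
  have D3: "int u1 * int w2 - int u2 * int w1 \<noteq> 0" using n3 unfolding d3_def by simp
  have D1: "int u1 * int v2 - int u2 * int v1 \<noteq> 0" using n1 unfolding d1_def by simp
  show ?thesis
  proof (cases "d2 > 0")
    case d2p: True
    show ?thesis
    proof (cases "d1 > 0")
      case d1p: True
      have "d3 > 0"
      proof (rule ccontr)
        assume "\<not> d3 > 0" hence "d3 \<le> 0" by simp
        hence "u1 = 0" "u2 = 0" using signs[OF d2p d1p _ e1] signs[OF d2p d1p _ e2] by auto
        thus False using n1 d1_def by simp
      qed
      from middle[OF D3 d2p d1p this e1 e2] show ?thesis by (simp only: G1)
    next
      case False
      hence d1n: "d1 < 0" using n1 by simp
      show ?thesis
      proof (cases "d3 > 0")
        case True
        have r: "(-d1) * int w1 + d3 * int v1 = d2 * int u1" "(-d1) * int w2 + d3 * int v2 = d2 * int u2"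
          using e1 e2 by (simp_all add: algebra_simps)
        have p: "-d1 > 0" using d1n by simp
        from middle[OF D13 p True d2p r] show ?thesis by (simp only: G2)
      next
        case False
        hence d3n: "d3 < 0" using n3 by simp
        have r: "d2 * int u1 + (-d3) * int v1 = (-d1) * int w1" "d2 * int u2 + (-d3) * int v2 = (-d1) * int w2"
          using e1 e2 by (simp_all add: algebra_simps)
        have p: "-d1 > 0" "-d3 > 0" using d1n d3n by simp_all
        from middle[OF D1 d2p p(2) p(1) r] show ?thesis by (simp only: G3)
      qed
    qed
  next
    case False
    hence d2n: "d2 < 0" using n2 by simp
    show ?thesis
    proof (cases "d1 < 0")
      case d1n: True
      have a: "-d2 > 0" "-d1 > 0" using d2n d1n by simp_all
      have f1: "(-d2) * int u1 + (-d1) * int w1 = (-d3) * int v1"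
        and f2: "(-d2) * int u2 + (-d1) * int w2 = (-d3) * int v2" using e1 e2 by (simp_all add: algebra_simps)
      have "-d3 > 0"
      proof (rule ccontr)
        assume "\<not> -d3 > 0" hence "-d3 \<le> 0" by simp
        hence "u1 = 0" "u2 = 0" using signs[OF a _ f1] signs[OF a _ f2] by auto
        thus False using n1 d1_def by simp
      qed
      from middle[OF D3 a this f1 f2] show ?thesis by (simp only: G1)
    next
      case False
      hence d1p: "d1 > 0" using n1 by simp
      show ?thesis
      proof (cases "d3 < 0")
        case True
        have r: "d1 * int w1 + (-d3) * int v1 = (-d2) * int u1" "d1 * int w2 + (-d3) * int v2 = (-d2) * int u2"
          using e1 e2 by (simp_all add: algebra_simps)
        have p: "-d3 > 0" "-d2 > 0" using True d2n by simp_all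
        from middle[OF D13 d1p p r] show ?thesis by (simp only: G2)
      next
        case False
        hence d3p: "d3 > 0" using n3 by simp
        have r: "(-d2) * int u1 + d3 * int v1 = d1 * int w1" "(-d2) * int u2 + d3 * int v2 = d1 * int w2"
          using e1 e2 by (simp_all add: algebra_simps)
        have p: "-d2 > 0" using d2n by simp
        from middle[OF D1 p d3p d1p r] show ?thesis by (simp only: G3)
      qed
    qed
  qed
qed

end
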